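(* The family $\mathcal S$ of SIP sets is not a filterdual; that is, there exist sets $A_1,A_2\subset\mathbb N$ such that $A_1\cup A_2$ is an SIP set but neither $A_1$ nor $A_2$ is an SIP set.
   Context: $\mathbb N=\{1,2,\dots\}$. For a finite set $F\subset\mathbb Z$, $\sigma_F$ is the sum of its elements ($\sigma_\emptyset=0$). For $A\subset\mathbb Z$: $IP(A)=\{\sigma_F:F\subset A\text{ finite}\}$ and $SIP(A)=\{a-b:a,b\in IP(A)\}$. A set $B\subset\mathbb N$ is an SIP set if there exists an infinite $A\subset\mathbb N$ with $SIP(A)\cap\mathbb N\subset B$. A family $\mathcal F$ of subsets of $\mathbb N$ (closed under taking supersets) is a filterdual if $A_1\cup A_2\in\mathcal F$ implies $A_1\in\mathcal F$ or $A_2\in\mathcal F$. *)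

theory Defs
  imports Main
begin

text \<open>Positive integers, playing the role of the paper's N = {1,2,...}.\<close>
definition Npos :: "int set" where
  "Npos = {n. n \<ge> 1}"

definition IP :: "int set \<Rightarrow> int set" where
  "IP A = {\<Sum>F | F. F \<subseteq> A \<and> finite F}"

definition SIP :: "int set \<Rightarrow> int set" where
  "SIP A = {a - b | a b. a \<in> IP A \<and> b \<in> IP A}"

definition is_SIP_set :: "int set \<Rightarrow> bool" where
  "is_SIP_set B \<longleftrightarrow> B \<subseteq> Npos \<and>
     (\<exists>A. A \<subseteq> Npos \<and> infinite A \<and> SIP A \<inter> Npos \<subseteq> B)"

end

theory Submission
  imports Defs
begin

definition C :: "int \<Rightarrow> int set" where
  "C r = {n. n \<ge> 1 \<and> (\<exists>k::nat. \<exists>m. n = 3^k*(3*m+r))}"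

lemma rep_unique_aux:
  fixes m l :: int and r s :: int
  assumes "r \<in> {1,2}" "s \<in> {1,2}" "3^k*(3*m+r) = 3^j*(3*l+s)" "k \<le> j"
  shows "k = j \<and> r = s"
proof -
  obtain d where d: "j = k + d" using assms(4) le_Suc_ex by blast
  have "(3::int)^k*(3*m+r) = 3^k*(3^d*(3*l+s))" using assms(3) d by (simp add: power_add)
  hence e: "3*m+r = 3^d*(3*l+s)" by simp
  show ?thesis
  proof (cases d)
    case 0
    then have "(3*m+r) mod 3 = (3*l+s) mod 3" using e by simp
    then show ?thesis using 0 d assms(1,2) by auto
  next
    case (Suc d')
    then have "3*m+r = 3*(3^d'*(3*l+s))" using e by simp
    then have "(3*m+r) mod 3 = 0" by simp
    moreover have "(3*m+r) mod 3 = r" using assms(1) by auto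
    ultimately show ?thesis using assms(1) by auto
  qed
qed

lemma rep_unique:
  fixes m l :: int and r s :: int
  assumes "r \<in> {1,2}" "s \<in> {1,2}" "3^k*(3*m+r) = 3^j*(3*l+s)"
  shows "k = j \<and> r = s"
  using rep_unique_aux[OF assms] rep_unique_aux[OF assms(2,1) assms(3)[symmetric]]
  by (cases "k \<le> j") auto

lemma C_disj: "C 1 \<inter> C 2 = {}"
  unfolding C_def using rep_unique[of 1 2] by fastforce

lemma rep_exists: "(n::int) \<ge> 1 \<Longrightarrow> \<exists>k::nat. \<exists>m r. r \<in> {1,2} \<and> n = 3^k*(3*m+r)"
proof (induction "nat n" arbitrary: n rule: less_induct)
  case less
  show ?case
  proof (cases "n mod 3 = 0")
    case True
    then obtain n' where n': "n = 3*n'" by auto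
    with less.prems have "n' \<ge> 1" by simp
    moreover have "nat n' < nat n" using n' less.prems by simp
    ultimately obtain k m r where "r \<in> {1,2}" "n' = 3^k*(3*m+r)" using less.hyps by blast
    then show ?thesis using n' by (intro exI[of _ "Suc k"]) auto
  next
    case False
    then have "n mod 3 \<in> {1,2}" by auto
    moreover have "n = 3^0*(3*(n div 3) + n mod 3)" by simp
    ultimately show ?thesis by blast
  qed
qed

lemma C_union: "C 1 \<union> C 2 = Npos"
proof
  show "C 1 \<union> C 2 \<subseteq> Npos" unfolding C_def Npos_def by auto
  show "Npos \<subseteq> C 1 \<union> C 2"
  proof
    fix n assume "n \<in> Npos"
    then have "n \<ge> 1" unfolding Npos_def by simp
    then obtain k m r where "r \<in> {1,2}" "n = 3^k*(3*m+r)" using rep_exists by blast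
    then show "n \<in> C 1 \<union> C 2" using \<open>n \<ge> 1\<close> unfolding C_def by auto
  qed
qed

lemma in_C: "x = 3^k*(3*m+r) \<Longrightarrow> x \<ge> 1 \<Longrightarrow> x \<in> C r"
  unfolding C_def by auto

lemma SIP_facts:
  assumes "a \<in> A" "b \<in> A" "a \<noteq> b"
  shows "a \<in> SIP A" "b \<in> SIP A" "a + b \<in> SIP A" "b - a \<in> SIP A"
proof -
  have ipa: "a \<in> IP A" unfolding IP_def using assms by (intro CollectI exI[of _ "{a}"]) auto
  have ipb: "b \<in> IP A" unfolding IP_def using assms by (intro CollectI exI[of _ "{b}"]) auto
  have ip0: "0 \<in> IP A" unfolding IP_def by (intro CollectI exI[of _ "{}"]) auto
  have ipab: "a + b \<in> IP A" unfolding IP_def using assms by (intro CollectI exI[of _ "{a,b}"]) auto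
  show "a \<in> SIP A" unfolding SIP_def using ipa ip0 by force
  show "b \<in> SIP A" unfolding SIP_def using ipb ip0 by force
  show "a + b \<in> SIP A" unfolding SIP_def using ipab ip0 by force
  show "b - a \<in> SIP A" unfolding SIP_def using ipa ipb by force
qed

lemma core:
  assumes A: "A \<subseteq> Npos" "infinite A"
  shows "\<exists>x\<in>SIP A \<inter> Npos. x \<in> C 1" "\<exists>y\<in>SIP A \<inter> Npos. y \<in> C 2"
proof -
  have ex: "\<And>a. a \<in> A \<Longrightarrow> \<exists>k::nat. \<exists>m r. r \<in> {1,2} \<and> a = 3^k*(3*m+r)"
    using A(1) rep_exists unfolding Npos_def by blast
  obtain a0 where "a0 \<in> A" using A(2) by (metis finite.emptyI ex_in_conv)
  define P where "P = (\<lambda>k::nat. \<exists>a\<in>A. \<exists>m r. r \<in> {1,2} \<and> a = 3^k*(3*m+r))"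
  have "\<exists>k. P k" using ex \<open>a0 \<in> A\<close> unfolding P_def by blast
  define k where "k = (LEAST k. P k)"
  have "P k" unfolding k_def using \<open>\<exists>k. P k\<close> by (metis LeastI)
  then obtain a m r where a: "a \<in> A" "r \<in> {1,2}" "a = 3^k*(3*m+r)" unfolding P_def by blast
  have "\<not> A \<subseteq> {1..a}" using A(2) finite_subset by blast
  then obtain b where b: "b \<in> A" "b > a" using A(1) unfolding Npos_def by force
  obtain j l s where bj: "s \<in> {1,2}" "b = 3^j*(3*l+s)" using ex[OF b(1)] by blast
  have "P j" using bj b(1) unfolding P_def by blast
  hence kj: "k \<le> j" unfolding k_def by (rule Least_le)
  have a1: "a \<ge> 1" using a(1) A(1) unfolding Npos_def by auto
  have S: "a \<in> SIP A" "b \<in> SIP A" "a + b \<in> SIP A" "b - a \<in> SIP A"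
    using SIP_facts[OF a(1) b(1)] b(2) by auto
  have N: "a \<in> Npos" "b \<in> Npos" "a + b \<in> Npos" "b - a \<in> Npos"
    using a1 b(2) unfolding Npos_def by auto
  have "(\<exists>x\<in>SIP A \<inter> Npos. x \<in> C 1) \<and> (\<exists>y\<in>SIP A \<inter> Npos. y \<in> C 2)"
  proof (cases "k = j")
    case True
    show ?thesis
    proof (cases "r = s")
      case rs: True
      have ab: "a + b = 3^k*(3*(m+l)+2*r)" using a(3) bj(2) True rs by (simp add: algebra_simps)
      show ?thesis
      proof (cases "r = 1")
        case True
        have "a \<in> C 1" using in_C[OF a(3)] a1 True by simp
        moreover have "a + b \<in> C 2" using in_C[of "a+b" k "m+l" 2] ab True N by (simp add: Npos_def)
        ultimately show ?thesis using S N by blast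
      next
        case False
        then have r2: "r = 2" using a(2) by auto
        have "a \<in> C 2" using in_C[OF a(3)] a1 r2 by simp
        moreover have "a + b = 3^k*(3*(m+l+1)+1)" using ab r2 by (simp add: algebra_simps)
        then have "a + b \<in> C 1" using in_C[of "a+b" k "m+l+1" 1] N by (simp add: Npos_def)
        ultimately show ?thesis using S N by blast
      qed
    next
      case False
      have "a \<in> C r" using in_C[OF a(3)] a1 by simp
      moreover have "b \<in> C s" using in_C[OF bj(2)] N by (simp add: Npos_def)
      ultimately show ?thesis using S N False a(2) bj(1) by auto
    qed
  next
    case False
    define d where "d = j - k - 1"
    have d: "j = k + Suc d" using kj False unfolding d_def by simp
    define t where "t = 3^d*(3*l+s)"
    have pj: "(3::int)^j = 3^k*(3*3^d)" by (simp add: d power_add)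
    have bt: "b = 3^k*(3*t)" using bj(2) unfolding pj t_def by (simp only: mult.assoc)
    have e1: "a + b = 3^k*(3*(t+m)+r)" using bt a(3) by (simp add: distrib_left)
    have e2: "b - a = 3^k*(3*(t-m-1)+(3-r))" using bt a(3) by (simp add: right_diff_distrib distrib_left)
    have c1: "a + b \<in> C r" using in_C[OF e1] N(3) unfolding Npos_def by simp
    have c2: "b - a \<in> C (3-r)" using in_C[OF e2] N(4) unfolding Npos_def by simp
    show ?thesis
    proof (cases "r = 1")
      case True
      then show ?thesis using c1 c2 S(3,4) N(3,4) by auto
    next
      case False
      then have "r = 2" using a(2) by auto
      then show ?thesis using c1 c2 S(3,4) N(3,4) by auto
    qed
  qed
  then show "\<exists>x\<in>SIP A \<inter> Npos. x \<in> C 1" "\<exists>y\<in>SIP A \<inter> Npos. y \<in> C 2" by auto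
qed

theorem theorem3p5:
  shows "\<exists>A1 A2. A1 \<subseteq> Npos \<and> A2 \<subseteq> Npos \<and> is_SIP_set (A1 \<union> A2)
           \<and> \<not> is_SIP_set A1 \<and> \<not> is_SIP_set A2"
proof (intro exI conjI)
  show "C 1 \<subseteq> Npos" "C 2 \<subseteq> Npos" using C_union by auto
  have inf: "infinite Npos"
  proof
    assume f: "finite Npos"
    have "1 \<in> Npos" unfolding Npos_def by simp
    then have m: "Max Npos \<in> Npos" using Max_in f by blast
    then have "Max Npos + 1 \<in> Npos" unfolding Npos_def by simp
    then have "Max Npos + 1 \<le> Max Npos" using Max_ge f by blast
    then show False by simp
  qed
  show "is_SIP_set (C 1 \<union> C 2)" unfolding is_SIP_set_def C_union using inf by blast
  show "\<not> is_SIP_set (C 1)" unfolding is_SIP_set_def using core(2) C_disj by blast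
  show "\<not> is_SIP_set (C 2)" unfolding is_SIP_set_def using core(1) C_disj by blast
qed

end
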